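(* For $p\in(0,\infty)$ and $w\in\mathbb{R}$ let $f_p(w)=\int_0^{\infty}x^{p-1}e^{-x^2}\sin(wx)\,\mathrm{d}x$. Suppose $p\in(0,2)$. Then there exists a constant $c_p\neq0$ such that for all $w\in\mathbb{R}$ $$f_p(w)=c_p\ \mathrm{p.v.}\!\int_{\mathbb{R}}\mathsf{sign}(t)|t|^{-p}e^{-(w-t)^2/4}\,\mathrm{d}t .$$ As a consequence, whenever $p\in(0,2]$, $f_p(w)=0$ only for $w=0$.
   Context: $\mathrm{p.v.}$ denotes the Cauchy principal value at $t=0$: $\lim_{\epsilon\downarrow0}\int_{|t|>\epsilon}$. *)

theory Defs
  imports "HOL-Analysis.Analysis"
begin

definition fp :: "real \<Rightarrow> real \<Rightarrow> real" where
  "fp p w = integral {0<..} (\<lambda>x. x powr (p - 1) * exp (- (x\<^sup>2)) * sin (w * x))"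

definition has_pv_integral :: "(real \<Rightarrow> real) \<Rightarrow> real \<Rightarrow> bool" where
  "has_pv_integral g L \<longleftrightarrow>
     (\<forall>\<epsilon>>0. g integrable_on {t. \<epsilon> < \<bar>t\<bar>}) \<and>
     ((\<lambda>\<epsilon>. integral {t. \<epsilon> < \<bar>t\<bar>} g) \<longlongrightarrow> L) (at_right 0)"

end

theory Submission imports Defs "HOL-Probability.Probability" "HOL-Real_Asymp.Real_Asymp" begin

lemma gauss_integrable: "integrable lborel (\<lambda>x::real. exp (- x\<^sup>2))"
proof -
  have "has_bochner_integral lborel (\<lambda>x::real. exp (- x\<^sup>2)) (2 *\<^sub>R (sqrt pi / 2))"
    by (rule has_bochner_integral_even_function[OF gaussian_moment_0]) simp
  then show ?thesis using integrable.intros by blast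
qed

lemma std_normal_cos:
  "(\<integral>x. std_normal_density x * cos (t * x) \<partial>lborel) = exp (- (t\<^sup>2) / 2)"
proof -
  interpret real_distribution std_normal_distribution by (rule real_dist_normal_dist)
  have int: "integrable std_normal_distribution (\<lambda>x. iexp (t * x))"
    by (rule integrable_const_bound[where B=1]) (auto simp: norm_exp_i_times)
  have "Re (char std_normal_distribution t) = (\<integral>x. cos (t * x) \<partial>std_normal_distribution)"
    unfolding char_def using integral_Re[OF int, symmetric] by (simp add: Re_exp)
  also have "\<dots> = (\<integral>x. std_normal_density x * cos (t * x) \<partial>lborel)"
    by (subst integral_density) (auto simp: normal_density_nonneg)
  finally show ?thesis using char_std_normal_distribution by (metis Re_complex_of_real)
qed

lemma gauss_cos_integrable: "integrable lborel (\<lambda>x::real. exp (- x\<^sup>2) * cos (u * x))"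
  by (rule Bochner_Integration.integrable_bound[OF gauss_integrable]) (auto simp: abs_mult)

lemma gauss_cos:
  "(\<integral>x. exp (- x\<^sup>2) * cos (u * x) \<partial>lborel) = sqrt pi * exp (- (u\<^sup>2) / 4)"
proof -
  define t where "t = u / sqrt 2"
  have s2: "sqrt 2 \<noteq> 0" by simp
  have "exp (- (u\<^sup>2) / 4) = exp (- (t\<^sup>2) / 2)" by (simp add: t_def power_divide)
  also have "\<dots> = (\<integral>x. std_normal_density x * cos (t * x) \<partial>lborel)"
    by (rule std_normal_cos[symmetric])
  also have "\<dots> = \<bar>sqrt 2\<bar> *\<^sub>R (\<integral>y. std_normal_density (0 + sqrt 2 * y) * cos (t * (0 + sqrt 2 * y)) \<partial>lborel)"
    by (rule lborel_integral_real_affine[OF s2])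
  also have "(\<lambda>y. std_normal_density (0 + sqrt 2 * y) * cos (t * (0 + sqrt 2 * y))) =
      (\<lambda>y. (1 / sqrt (2 * pi)) * (exp (- y\<^sup>2) * cos (u * y)))"
    by (rule ext) (simp add: std_normal_density_def t_def power_mult_distrib)
  also have "\<bar>sqrt 2\<bar> *\<^sub>R (\<integral>y. (1 / sqrt (2 * pi)) * (exp (- y\<^sup>2) * cos (u * y)) \<partial>lborel)
     = (1 / sqrt pi) * (\<integral>y. exp (- y\<^sup>2) * cos (u * y) \<partial>lborel)"
    by (simp add: real_sqrt_mult)
  finally show ?thesis by (simp add: field_simps)
qed

lemma even_half:
  fixes h :: "real \<Rightarrow> real"
  assumes h: "integrable lborel h" and ev: "\<And>x. h (- x) = h x"
  shows "integrable lborel (\<lambda>x. indicator {0<..} x * h x)"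
    and "(\<integral>x. indicator {0<..} x * h x \<partial>lborel) = (\<integral>x. h x \<partial>lborel) / 2"
proof -
  have hm[measurable]: "h \<in> borel_measurable borel" using h by auto
  show i1: "integrable lborel (\<lambda>x. indicator {0<..} x * h x)"
    using integrable_mult_indicator[OF _ h, of "{0<..}"] by simp
  have i2: "integrable lborel (\<lambda>x. indicator {..0} x * h x)"
    using integrable_mult_indicator[OF _ h, of "{..0}"] by simp
  have "(\<integral>x. h x \<partial>lborel) = (\<integral>x. indicator {0<..} x * h x + indicator {..0} x * h x \<partial>lborel)"
    by (rule Bochner_Integration.integral_cong) (auto simp: indicator_def)
  also have "\<dots> = (\<integral>x. indicator {0<..} x * h x \<partial>lborel) + (\<integral>x. indicator {..0} x * h x \<partial>lborel)"
    by (rule Bochner_Integration.integral_add[OF i1 i2])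
  also have "(\<integral>x. indicator {..0} x * h x \<partial>lborel) = \<bar>-1\<bar> *\<^sub>R (\<integral>x. indicator {..0} (0 + (-1) * x) * h (0 + (-1) * x) \<partial>lborel)"
    by (rule lborel_integral_real_affine) simp
  also have "\<dots> = (\<integral>x. indicator {0<..} x * h x \<partial>lborel)"
    by (simp add: ev, rule integral_cong_AE)
       (auto intro!: eventually_mono[OF AE_lborel_singleton[of 0]] simp: indicator_def)
  finally show "(\<integral>x. indicator {0<..} x * h x \<partial>lborel) = (\<integral>x. h x \<partial>lborel) / 2" by simp
qed

lemma sin_sin_gauss:
  fixes w t :: real
  shows "integrable lborel (\<lambda>x. indicator {0<..} x * (exp (- x\<^sup>2) * sin (w * x) * sin (t * x)))"
    and "(\<integral>x. indicator {0<..} x * (exp (- x\<^sup>2) * sin (w * x) * sin (t * x)) \<partial>lborel)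
        = sqrt pi / 4 * (exp (- ((w - t)\<^sup>2) / 4) - exp (- ((w + t)\<^sup>2) / 4))"
proof -
  let ?h = "\<lambda>x. exp (- x\<^sup>2) * sin (w * x) * sin (t * x)"
  have eq: "?h x = (exp (- x\<^sup>2) * cos ((w - t) * x) - exp (- x\<^sup>2) * cos ((w + t) * x)) / 2" for x
    by (simp add: left_diff_distrib distrib_right cos_diff cos_add algebra_simps)
  have hi: "integrable lborel ?h"
    unfolding eq by (intro integrable_divide Bochner_Integration.integrable_diff gauss_cos_integrable)
  show "integrable lborel (\<lambda>x. indicator {0<..} x * ?h x)"
    by (rule even_half(1)[OF hi]) simp
  have "(\<integral>x. ?h x \<partial>lborel) = ((\<integral>x. exp (- x\<^sup>2) * cos ((w - t) * x) \<partial>lborel) - (\<integral>x. exp (- x\<^sup>2) * cos ((w + t) * x) \<partial>lborel)) / 2"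
    unfolding eq by (simp add: Bochner_Integration.integral_diff gauss_cos_integrable)
  also have "\<dots> = sqrt pi / 2 * (exp (- ((w - t)\<^sup>2) / 4) - exp (- ((w + t)\<^sup>2) / 4))"
    by (simp only: gauss_cos) (simp add: field_simps)
  finally show "(\<integral>x. indicator {0<..} x * ?h x \<partial>lborel) = sqrt pi / 4 * (exp (- ((w - t)\<^sup>2) / 4) - exp (- ((w + t)\<^sup>2) / 4))"
    using even_half(2)[OF hi] by simp
qed

lemma ind_AE:
  fixes f :: "real \<Rightarrow> real"
  shows "AE x in lborel. indicator {0<..} x * f x = indicator {0..} x * f x"
  by (rule eventually_mono[OF AE_lborel_singleton[of 0]]) (auto simp: indicator_def)

lemma ftc_half:
  fixes f F :: "real \<Rightarrow> real"
  assumes fm[measurable]: "f \<in> borel_measurable borel"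
    and der: "\<And>x. (F has_real_derivative f x) (at x)"
    and int: "integrable lborel (\<lambda>x. indicator {0<..} x * f x)"
    and lim: "(F \<longlongrightarrow> B) at_top"
  shows "(\<integral>x. indicator {0<..} x * f x \<partial>lborel) = B - F 0"
proof -
  have int0: "set_integrable lborel {0..} f"
    unfolding set_integrable_def real_scaleR_def
    by (rule integrable_cong_AE_imp[OF int], measurable, rule ind_AE)
  have eq0: "(\<integral>x. indicator {0<..} x * f x \<partial>lborel) = set_lebesgue_integral lborel {0..} f"
    unfolding set_lebesgue_integral_def by (auto intro!: integral_cong_AE ind_AE)
  have "((\<lambda>b. set_lebesgue_integral lborel {0..b} f) \<longlongrightarrow> set_lebesgue_integral lborel {0..} f) at_top"
    by (rule tendsto_set_lebesgue_integral_at_top[OF _ int0]) simp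
  moreover have "\<forall>\<^sub>F b in at_top. set_lebesgue_integral lborel {0..b} f = F b - F 0"
  proof (rule eventually_mono[OF eventually_ge_at_top[of 0]])
    fix b :: real assume b: "0 \<le> b"
    have si: "set_integrable lborel {0..b} f"
      by (rule set_integrable_subset[OF int0]) auto
    have "(f has_integral (F b - F 0)) {0..b}"
      using b der
      by (intro fundamental_theorem_of_calculus)
         (auto simp flip: has_real_derivative_iff_has_vector_derivative intro: has_field_derivative_at_within)
    then show "set_lebesgue_integral lborel {0..b} f = F b - F 0"
      using set_borel_integral_eq_integral[OF si] by (simp add: integral_unique)
  qed
  ultimately have "((\<lambda>b. F b - F 0) \<longlongrightarrow> set_lebesgue_integral lborel {0..} f) at_top"
    using Lim_transform_eventually by fastforce
  moreover have "((\<lambda>b. F b - F 0) \<longlongrightarrow> B - F 0) at_top"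
    by (intro tendsto_intros lim)
  ultimately show ?thesis using eq0 tendsto_unique[OF trivial_limit_at_top_linorder] by auto
qed

lemma hk_to_lborel:
  fixes f :: "real \<Rightarrow> real"
  assumes [measurable]: "f \<in> borel_measurable borel" and A[measurable]: "A \<in> sets borel"
    and "f integrable_on A" and "\<And>x. x \<in> A \<Longrightarrow> 0 \<le> f x"
  shows "integrable lborel (\<lambda>x. indicator A x * f x)"
proof -
  have "f absolutely_integrable_on A"
    by (rule nonnegative_absolutely_integrable_1) (use assms in auto)
  then have "integrable lebesgue (\<lambda>x. indicator A x *\<^sub>R f x)"
    unfolding set_integrable_def .
  then show ?thesis
    using integrable_completion[of "\<lambda>x. indicator A x *\<^sub>R f x" lborel] by simp
qed

lemma exp_lin_integrable:
  assumes "s > 0"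
  shows "integrable lborel (\<lambda>x::real. indicator {0..} x * exp (- (s * x)))"
  using hk_to_lborel[of "\<lambda>x. exp (- (s * x))" "{0..}"]
    integrable_on_exp_minus_to_infinity[OF assms, of 0] by simp

lemma powr0_integrable:
  assumes "a > -1"
  shows "integrable lborel (\<lambda>x::real. indicator {0<..1} x * x powr a)"
proof -
  have "integrable lborel (\<lambda>x::real. indicator {0..1} x * x powr a)"
    using hk_to_lborel[of "\<lambda>x. x powr a" "{0..1}"] integrable_on_powr_from_0[OF assms, of 1] by simp
  then show ?thesis
    by (rule Bochner_Integration.integrable_bound) (auto simp: indicator_def)
qed

lemma powr_inf_integrable:
  assumes "a < -1"
  shows "integrable lborel (\<lambda>x::real. indicator {1..} x * x powr a)"
  using hk_to_lborel[of "\<lambda>x. x powr a" "{1..}"] has_integral_powr_to_inf[OF assms, of 1]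
  by (auto simp: integrable_on_def)

lemma gauss_shift_integrable: "integrable lborel (\<lambda>t::real. exp (- ((w - t)\<^sup>2) / 4))"
proof -
  have "integrable lborel (\<lambda>t::real. exp (- (( w / 2) + (-1/2) * t)\<^sup>2))"
    by (rule lborel_integrable_real_affine[OF gauss_integrable]) simp
  moreover have "(\<lambda>t::real. exp (- (( w / 2) + (-1/2) * t)\<^sup>2)) = (\<lambda>t. exp (- ((w - t)\<^sup>2) / 4))"
    by (rule ext) (simp add: power2_eq_square field_simps)
  ultimately show ?thesis by simp
qed

lemma aux_cancel: "(d::real) \<noteq> 0 \<Longrightarrow> (- 1 / d) * ((- d) * E) = E"
  by simp

lemma laplace_sin:
  fixes s x :: real
  assumes s: "s > 0"
  shows "integrable lborel (\<lambda>t. indicator {0<..} t * (exp (- (s * t)) * sin (x * t)))"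
    and "(\<integral>t. indicator {0<..} t * (exp (- (s * t)) * sin (x * t)) \<partial>lborel) = x / (s\<^sup>2 + x\<^sup>2)"
proof -
  have d: "s\<^sup>2 + x\<^sup>2 > 0" using s by (simp add: add_pos_nonneg)
  show int: "integrable lborel (\<lambda>t. indicator {0<..} t * (exp (- (s * t)) * sin (x * t)))"
    by (rule Bochner_Integration.integrable_bound[OF exp_lin_integrable[OF s]])
       (auto simp: indicator_def abs_mult intro!: mult_left_le)
  define F where "F t = - exp (- (s * t)) * (s * sin (x * t) + x * cos (x * t)) / (s\<^sup>2 + x\<^sup>2)" for t
  have der: "(F has_real_derivative (exp (- (s * t)) * sin (x * t))) (at t)" for t
  proof -
    have "((\<lambda>t. exp (- (s * t)) * (s * sin (x * t) + x * cos (x * t))) has_real_derivative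
       (- (s\<^sup>2 + x\<^sup>2)) * (exp (- (s * t)) * sin (x * t))) (at t)"
      by (auto intro!: derivative_eq_intros simp: algebra_simps power2_eq_square)
    from DERIV_cmult[OF this, of "- 1 / (s\<^sup>2 + x\<^sup>2)"]
    have "((\<lambda>t. - 1 / (s\<^sup>2 + x\<^sup>2) * (exp (- (s * t)) * (s * sin (x * t) + x * cos (x * t)))) has_real_derivative
       (- 1 / (s\<^sup>2 + x\<^sup>2)) * ((- (s\<^sup>2 + x\<^sup>2)) * (exp (- (s * t)) * sin (x * t)))) (at t)" .
    moreover have "(- 1 / (s\<^sup>2 + x\<^sup>2)) * ((- (s\<^sup>2 + x\<^sup>2)) * (exp (- (s * t)) * sin (x * t))) = exp (- (s * t)) * sin (x * t)"
      using d by (intro aux_cancel) auto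
    moreover have "(\<lambda>t. - 1 / (s\<^sup>2 + x\<^sup>2) * (exp (- (s * t)) * (s * sin (x * t) + x * cos (x * t)))) = F"
      by (rule ext) (simp add: F_def)
    ultimately show ?thesis by simp
  qed
  have lim: "(F \<longlongrightarrow> 0) at_top"
  proof (rule Lim_null_comparison)
    show "\<forall>\<^sub>F t in at_top. norm (F t) \<le> exp (- (s * t)) * (\<bar>s\<bar> + \<bar>x\<bar>) / (s\<^sup>2 + x\<^sup>2)"
    proof (intro always_eventually allI)
      fix t
      have "\<bar>s * sin (x * t) + x * cos (x * t)\<bar> \<le> \<bar>s\<bar> + \<bar>x\<bar>"
        by (rule order_trans[OF abs_triangle_ineq]) (auto simp: abs_mult intro!: add_mono mult_left_le)
      then show "norm (F t) \<le> exp (- (s * t)) * (\<bar>s\<bar> + \<bar>x\<bar>) / (s\<^sup>2 + x\<^sup>2)"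
        unfolding F_def using d by (auto simp: abs_mult divide_right_mono)
    qed
    show "((\<lambda>t. exp (- (s * t)) * (\<bar>s\<bar> + \<bar>x\<bar>) / (s\<^sup>2 + x\<^sup>2)) \<longlongrightarrow> 0) at_top"
      using s by real_asymp
  qed
  have "(\<integral>t. indicator {0<..} t * (exp (- (s * t)) * sin (x * t)) \<partial>lborel) = 0 - F 0"
    by (rule ftc_half[OF _ der int lim]) measurable
  then show "(\<integral>t. indicator {0<..} t * (exp (- (s * t)) * sin (x * t)) \<partial>lborel) = x / (s\<^sup>2 + x\<^sup>2)"
    by (simp add: F_def)
qed

lemma gamma_scaled:
  fixes p t :: real
  assumes p: "p > 0" and t: "t > 0"
  shows "integrable lborel (\<lambda>s. indicator {0<..} s * (s powr (p - 1) * exp (- (s * t))))"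
    and "(\<integral>s. indicator {0<..} s * (s powr (p - 1) * exp (- (s * t))) \<partial>lborel) = Gamma p * t powr (- p)"
proof -
  let ?f = "\<lambda>u. indicator {0<..} u * (u powr (p - 1) * exp (- u))"
  have hk: "((\<lambda>u. u powr (p - 1) / exp u) has_integral Gamma p) {0..}"
    by (rule Gamma_integral_real[OF p])
  have i0: "integrable lborel (\<lambda>u. indicator {0..} u * (u powr (p - 1) / exp u))"
    by (rule hk_to_lborel) (use hk in \<open>auto simp: integrable_on_def\<close>)
  have "set_integrable lborel {0..} (\<lambda>u. u powr (p - 1) / exp u)"
    using i0 by (simp add: set_integrable_def)
  from set_borel_integral_eq_integral(2)[OF this] hk
  have v0: "(\<integral>u. indicator {0..} u * (u powr (p - 1) / exp u) \<partial>lborel) = Gamma p"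
    by (simp add: set_lebesgue_integral_def integral_unique)
  have fi: "integrable lborel ?f"
    by (rule integrable_cong_AE_imp[OF i0]) (auto intro!: eventually_mono[OF AE_lborel_singleton[of 0]] simp: indicator_def exp_minus field_simps)
  have fv: "(\<integral>u. ?f u \<partial>lborel) = Gamma p"
    unfolding v0[symmetric]
    by (rule integral_cong_AE) (auto intro!: eventually_mono[OF AE_lborel_singleton[of 0]] simp: indicator_def exp_minus field_simps)
  have eq: "?f (0 + t * s) = t powr (p - 1) * (indicator {0<..} s * (s powr (p - 1) * exp (- (s * t))))" for s
    using t by (auto simp: indicator_def powr_mult zero_less_mult_iff mult.commute)
  have "integrable lborel (\<lambda>s. ?f (0 + t * s))"
    by (rule lborel_integrable_real_affine[OF fi]) (use t in simp)
  then have "integrable lborel (\<lambda>s. t powr (p - 1) * (indicator {0<..} s * (s powr (p - 1) * exp (- (s * t)))))"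
    unfolding eq .
  then show "integrable lborel (\<lambda>s. indicator {0<..} s * (s powr (p - 1) * exp (- (s * t))))"
    using t by simp
  have "Gamma p = \<bar>t\<bar> *\<^sub>R (\<integral>s. ?f (0 + t * s) \<partial>lborel)"
    unfolding fv[symmetric] by (rule lborel_integral_real_affine) (use t in simp)
  also have "\<dots> = t * t powr (p - 1) * (\<integral>s. indicator {0<..} s * (s powr (p - 1) * exp (- (s * t))) \<partial>lborel)"
    unfolding eq using t by simp
  also have "t * t powr (p - 1) = t powr p"
    using t by (simp add: powr_diff)
  finally show "(\<integral>s. indicator {0<..} s * (s powr (p - 1) * exp (- (s * t))) \<partial>lborel) = Gamma p * t powr (- p)"
    using t by (simp add: powr_minus field_simps)
qed

definition Kc :: "real \<Rightarrow> real" where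
  "Kc p = (\<integral>u. indicator {0<..} u * (u powr (p - 1) / (u\<^sup>2 + 1)) \<partial>lborel)"

lemma K_integrable:
  fixes p :: real
  assumes p: "0 < p" "p < 2"
  shows "integrable lborel (\<lambda>u. indicator {0<..} u * (u powr (p - 1) / (u\<^sup>2 + 1)))"
proof -
  have b: "integrable lborel (\<lambda>u::real. indicator {0<..1} u * u powr (p - 1) + indicator {1..} u * u powr (p - 3))"
    using powr0_integrable[of "p - 1"] powr_inf_integrable[of "p - 3"] p by auto
  show ?thesis
  proof (rule Bochner_Integration.integrable_bound[OF b], measurable, intro always_eventually allI)
    fix u :: real
    show "norm (indicator {0<..} u * (u powr (p - 1) / (u\<^sup>2 + 1))) \<le>
          norm (indicator {0<..1} u * u powr (p - 1) + indicator {1..} u * u powr (p - 3))"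
    proof (cases "u \<le> 0")
      case True then show ?thesis by (simp add: indicator_def)
    next
      case False
      show ?thesis
      proof (cases "u \<le> 1")
        case True
        have "u powr (p - 1) / (u\<^sup>2 + 1) \<le> u powr (p - 1) / 1"
          by (intro divide_left_mono) (auto intro: add_nonneg_pos)
        with True False show ?thesis by (simp add: indicator_def)
      next
        case F2: False
        have "u powr (p - 3) = u powr (p - 1) / u\<^sup>2"
          using F2 by (simp add: powr_diff[symmetric] powr_numeral[symmetric] del: powr_numeral)
        also have "\<dots> \<ge> u powr (p - 1) / (u\<^sup>2 + 1)"
          using F2 by (intro divide_left_mono) (auto intro!: mult_pos_pos add_nonneg_pos)
        finally show ?thesis using F2 by (simp add: indicator_def)
      qed
    qed
  qed
qed


lemma not_AE_pos: "\<not> (AE x in lborel. (x::real) \<le> 0)"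
proof
  assume "AE x in lborel. (x::real) \<le> 0"
  then have "{x \<in> space lborel. \<not> (x::real) \<le> 0} \<in> null_sets lborel"
    by (subst (asm) AE_iff_null) auto
  then have "{0<..(1::real)} \<in> null_sets lborel"
    by (rule null_sets_subset) auto
  then have "emeasure lborel {0<..(1::real)} = 0" by auto
  then show False by simp
qed

lemma integral_pos_on_pos:
  fixes h :: "real \<Rightarrow> real"
  assumes int: "integrable lborel (\<lambda>x. indicator {0<..} x * h x)"
    and pos: "\<And>x. x > 0 \<Longrightarrow> h x > 0"
  shows "(\<integral>x. indicator {0<..} x * h x \<partial>lborel) > 0"
proof -
  have nn0: "0 \<le> indicator {0<..} x * h x" for x
    using pos[of x] by (cases "x > 0") (simp_all add: indicator_def)
  then have nn: "AE x in lborel. 0 \<le> indicator {0<..} x * h x" by simp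
  have "(\<integral>x. indicator {0<..} x * h x \<partial>lborel) \<ge> 0"
    by (rule integral_nonneg_AE[OF nn])
  moreover have "(\<integral>x. indicator {0<..} x * h x \<partial>lborel) \<noteq> 0"
  proof
    assume "(\<integral>x. indicator {0<..} x * h x \<partial>lborel) = 0"
    then have "AE x in lborel. indicator {0<..} x * h x = 0"
      using integral_nonneg_eq_0_iff_AE[OF int nn] by simp
    moreover have "indicator {0<..} x * h x = 0 \<Longrightarrow> x \<le> 0" for x :: real
      using pos[of x] by (cases "x > 0") (simp_all add: indicator_def)
    ultimately have "AE x in lborel. (x::real) \<le> 0"
      by (rule eventually_mono)
    with not_AE_pos show False by simp
  qed
  ultimately show ?thesis by simp
qed

lemma K_pos: "0 < p \<Longrightarrow> p < 2 \<Longrightarrow> Kc p > 0"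
  unfolding Kc_def by (rule integral_pos_on_pos[OF K_integrable]) (auto intro!: divide_pos_pos add_nonneg_pos)

lemma K_alg:
  fixes S X s x :: real
  assumes "X > 0" "x > 0"
  shows "(S / X) / ((s / x)\<^sup>2 + 1) = (x / X) * (S * (x / (s\<^sup>2 + x\<^sup>2)))"
proof -
  have "(s / x)\<^sup>2 + 1 = (s\<^sup>2 + x\<^sup>2) / x\<^sup>2"
    using assms by (simp add: field_simps power2_eq_square)
  moreover have "s\<^sup>2 + x\<^sup>2 > 0" using assms by (simp add: add_nonneg_pos)
  ultimately show ?thesis using assms by (simp add: field_simps power2_eq_square)
qed

lemma K_scaled:
  fixes p x :: real
  assumes p: "0 < p" "p < 2" and x: "x > 0"
  shows "integrable lborel (\<lambda>s. indicator {0<..} s * (s powr (p - 1) * (x / (s\<^sup>2 + x\<^sup>2))))"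
    and "(\<integral>s. indicator {0<..} s * (s powr (p - 1) * (x / (s\<^sup>2 + x\<^sup>2))) \<partial>lborel) = Kc p * x powr (p - 1)"
proof -
  let ?f = "\<lambda>u. indicator {0<..} u * (u powr (p - 1) / (u\<^sup>2 + 1))"
  have fi: "integrable lborel ?f" by (rule K_integrable[OF p])
  have X: "x powr (p - 1) > 0" using x by simp
  have x2: "x powr (2 - p) = x / x powr (p - 1)"
  proof -
    have "x powr (2 - p) = x powr (1 - (p - 1))" by simp
    also have "\<dots> = x powr 1 / x powr (p - 1)" by (rule powr_diff)
    finally show ?thesis using x by simp
  qed
  have eq: "?f (0 + (1 / x) * s) = x powr (2 - p) * (indicator {0<..} s * (s powr (p - 1) * (x / (s\<^sup>2 + x\<^sup>2))))" for s
  proof (cases "s > 0")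
    case True
    have "(s / x) powr (p - 1) = s powr (p - 1) / x powr (p - 1)"
      using True x by (intro powr_divide)
    then have "?f (0 + (1 / x) * s) = (s powr (p - 1) / x powr (p - 1)) / ((s / x)\<^sup>2 + 1)"
      using True x by (simp add: indicator_def)
    also have "\<dots> = (x / x powr (p - 1)) * (s powr (p - 1) * (x / (s\<^sup>2 + x\<^sup>2)))"
      by (rule K_alg[OF X x])
    finally show ?thesis using True by (simp add: x2 indicator_def)
  next
    case False
    then have "\<not> (0 < s / x)" using x by (simp add: zero_less_divide_iff)
    with False show ?thesis by (simp add: indicator_def)
  qed
  have "integrable lborel (\<lambda>s. ?f (0 + (1 / x) * s))"
    by (rule lborel_integrable_real_affine[OF fi]) (use x in simp)
  then have "integrable lborel (\<lambda>s. x powr (2 - p) * (indicator {0<..} s * (s powr (p - 1) * (x / (s\<^sup>2 + x\<^sup>2)))))"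
    unfolding eq .
  then show "integrable lborel (\<lambda>s. indicator {0<..} s * (s powr (p - 1) * (x / (s\<^sup>2 + x\<^sup>2))))"
    using x by (simp only: integrable_mult_left_iff) simp
  have "Kc p = \<bar>1 / x\<bar> *\<^sub>R (\<integral>s. ?f (0 + (1 / x) * s) \<partial>lborel)"
    unfolding Kc_def by (rule lborel_integral_real_affine) (use x in simp)
  also have "\<dots> = (1 / x) * (x / x powr (p - 1)) * (\<integral>s. indicator {0<..} s * (s powr (p - 1) * (x / (s\<^sup>2 + x\<^sup>2))) \<partial>lborel)"
    unfolding eq x2 integral_mult_right_zero using x by simp
  finally show "(\<integral>s. indicator {0<..} s * (s powr (p - 1) * (x / (s\<^sup>2 + x\<^sup>2))) \<partial>lborel) = Kc p * x powr (p - 1)"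
    using x X by (simp add: field_simps)
qed

definition Dg :: "real \<Rightarrow> real \<Rightarrow> real" where
  "Dg w t = exp (- ((w - t)\<^sup>2) / 4) - exp (- ((w + t)\<^sup>2) / 4)"

lemma gderiv_bound: "\<bar>- ((u::real) / 2) * exp (- (u\<^sup>2) / 4)\<bar> \<le> 1 / 2"
proof -
  have "\<bar>u\<bar> \<le> 1 + u\<^sup>2 / 4"
    using sum_power2_ge_zero[of "\<bar>u\<bar> - 2" 0] by (simp add: power2_eq_square algebra_simps)
  also have "\<dots> \<le> exp (u\<^sup>2 / 4)" by (rule exp_ge_add_one_self)
  finally have "\<bar>u\<bar> * exp (- (u\<^sup>2) / 4) \<le> 1"
    by (simp add: exp_minus field_simps)
  then show ?thesis by (simp add: abs_mult)
qed

lemma gauss_lip: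
  fixes a b :: real
  shows "\<bar>exp (- (a\<^sup>2) / 4) - exp (- (b\<^sup>2) / 4)\<bar> \<le> \<bar>a - b\<bar> / 2"
proof -
  have der: "DERIV (\<lambda>u. exp (- (u\<^sup>2) / 4)) x :> (- (x / 2) * exp (- (x\<^sup>2) / 4))" for x :: real
    by (auto intro!: derivative_eq_intros simp: field_simps)
  have main: "\<bar>exp (- (b\<^sup>2) / 4) - exp (- (a\<^sup>2) / 4)\<bar> \<le> (b - a) / 2" if ab: "a < b" for a b :: real
  proof -
    obtain z where "exp (- (b\<^sup>2) / 4) - exp (- (a\<^sup>2) / 4) = (b - a) * (- (z / 2) * exp (- (z\<^sup>2) / 4))"
      using MVT2[of a b "\<lambda>u. exp (- (u\<^sup>2) / 4)" "\<lambda>x. - (x / 2) * exp (- (x\<^sup>2) / 4)"] ab der by blast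
    then have "\<bar>exp (- (b\<^sup>2) / 4) - exp (- (a\<^sup>2) / 4)\<bar> = (b - a) * \<bar>- (z / 2) * exp (- (z\<^sup>2) / 4)\<bar>"
      using that by (simp add: abs_mult)
    also have "\<dots> \<le> (b - a) * (1 / 2)"
      using that gderiv_bound[of z] by (intro mult_left_mono) auto
    finally show ?thesis by simp
  qed
  consider "a < b" | "a = b" | "b < a" by linarith
  then show ?thesis
  proof cases
    case 1 then show ?thesis using main[OF 1] by (simp add: abs_minus_commute)
  next
    case 3 then show ?thesis using main[OF 3] by simp
  qed simp
qed

lemma Dg_bound: "\<bar>Dg w t\<bar> \<le> \<bar>t\<bar>"
proof -
  have "\<bar>Dg w t\<bar> \<le> \<bar>(w - t) - (w + t)\<bar> / 2"
    unfolding Dg_def by (rule gauss_lip)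
  also have "\<dots> = \<bar>t\<bar>" by simp
  finally show ?thesis .
qed

lemma Dg_bound2: "\<bar>Dg w t\<bar> \<le> exp (- ((w - t)\<^sup>2) / 4) + exp (- ((w + t)\<^sup>2) / 4)"
  unfolding Dg_def by (rule order_trans[OF abs_triangle_ineq4]) simp

lemma Dg_measurable[measurable]: "(\<lambda>t. Dg w t) \<in> borel_measurable borel"
  unfolding Dg_def by measurable

lemma L_integrable:
  fixes p w :: real
  assumes p: "0 < p" "p < 2"
  shows "integrable lborel (\<lambda>t. indicator {0<..} t * (t powr (- p) * Dg w t))"
proof -
  have g2: "integrable lborel (\<lambda>t::real. exp (- ((w + t)\<^sup>2) / 4))"
  proof -
    have "(\<lambda>t::real. exp (- ((- w - t)\<^sup>2) / 4)) = (\<lambda>t. exp (- ((w + t)\<^sup>2) / 4))"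
      by (rule ext) (simp add: power2_eq_square algebra_simps)
    then show ?thesis using gauss_shift_integrable[of "- w"] by simp
  qed
  have gg: "integrable lborel (\<lambda>t::real. indicator {1<..} t * (exp (- ((w - t)\<^sup>2) / 4) + exp (- ((w + t)\<^sup>2) / 4)))"
    using integrable_mult_indicator[of "{1<..}" lborel, OF _ Bochner_Integration.integrable_add[OF gauss_shift_integrable g2]]
    by simp
  have b: "integrable lborel (\<lambda>t::real. indicator {0<..1} t * t powr (1 - p) + indicator {1<..} t * (exp (- ((w - t)\<^sup>2) / 4) + exp (- ((w + t)\<^sup>2) / 4)))"
    using powr0_integrable[of "1 - p"] gg p by auto
  show ?thesis
  proof (rule Bochner_Integration.integrable_bound[OF b], measurable, intro always_eventually allI)
    fix t :: real
    show "norm (indicator {0<..} t * (t powr (- p) * Dg w t)) \<le>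
      norm (indicator {0<..1} t * t powr (1 - p) + indicator {1<..} t * (exp (- ((w - t)\<^sup>2) / 4) + exp (- ((w + t)\<^sup>2) / 4)))"
    proof (cases "t \<le> 0")
      case True then show ?thesis by (simp add: indicator_def)
    next
      case False
      show ?thesis
      proof (cases "t \<le> 1")
        case True
        have "t powr (- p) * \<bar>Dg w t\<bar> \<le> t powr (- p) * t"
          using Dg_bound[of w t] False by (intro mult_left_mono) auto
        also have "t powr (- p) * t = t powr (1 - p)"
          using False by (simp add: powr_diff powr_minus field_simps)
        finally show ?thesis using True False by (simp add: indicator_def abs_mult)
      next
        case F2: False
        have "t powr (- p) * \<bar>Dg w t\<bar> \<le> 1 * (exp (- ((w - t)\<^sup>2) / 4) + exp (- ((w + t)\<^sup>2) / 4))"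
        proof (rule mult_mono)
          have "t powr (- p) \<le> t powr 0" using F2 p by (intro powr_mono) auto
          then show "t powr (- p) \<le> 1" using F2 by simp
        qed (use Dg_bound2[of w t] in auto)
        then show ?thesis using F2 by (simp add: indicator_def abs_mult)
      qed
    qed
  qed
qed

lemma P_integrable:
  fixes p :: real
  assumes p: "0 < p" "p \<le> 2"
  shows "integrable lborel (\<lambda>x. indicator {0<..} x * (x powr (p - 1) * exp (- (x\<^sup>2))))"
proof -
  have m1: "integrable lborel (\<lambda>x::real. indicator {0..} x *\<^sub>R (exp (- x\<^sup>2) * x))"
    using gaussian_moment_1 integrable.intros by blast
  have b: "integrable lborel (\<lambda>x::real. indicator {0<..1} x * x powr (p - 1) + indicator {0..} x * (exp (- x\<^sup>2) * x))"
    using powr0_integrable[of "p - 1"] m1 p by auto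
  show ?thesis
  proof (rule Bochner_Integration.integrable_bound[OF b], measurable, intro always_eventually allI)
    fix x :: real
    show "norm (indicator {0<..} x * (x powr (p - 1) * exp (- (x\<^sup>2)))) \<le>
      norm (indicator {0<..1} x * x powr (p - 1) + indicator {0..} x * (exp (- x\<^sup>2) * x))"
    proof (cases "x \<le> 0")
      case True then show ?thesis by (simp add: indicator_def)
    next
      case False
      show ?thesis
      proof (cases "x \<le> 1")
        case True
        have "x powr (p - 1) * exp (- (x\<^sup>2)) \<le> x powr (p - 1) * 1"
          by (intro mult_left_mono) auto
        then show ?thesis using True False by (simp add: indicator_def add_increasing2)
      next
        case F2: False
        have "x powr (p - 1) \<le> x powr 1" using F2 p by (intro powr_mono) auto
        then have "x powr (p - 1) * exp (- (x\<^sup>2)) \<le> x * exp (- (x\<^sup>2))"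
          using F2 by (intro mult_right_mono) auto
        then show ?thesis using F2 by (simp add: indicator_def mult.commute)
      qed
    qed
  qed
qed

lemma fp_integrable:
  fixes p w :: real
  assumes p: "0 < p" "p \<le> 2"
  shows "integrable lborel (\<lambda>x. indicator {0<..} x * (x powr (p - 1) * exp (- (x\<^sup>2)) * sin (w * x)))"
  by (rule Bochner_Integration.integrable_bound[OF P_integrable[OF p]], measurable)
     (auto simp: indicator_def abs_mult intro!: mult_left_le)

lemma fp_lebesgue:
  fixes p w :: real
  assumes p: "0 < p" "p \<le> 2"
  shows "fp p w = (\<integral>x. indicator {0<..} x * (x powr (p - 1) * exp (- (x\<^sup>2)) * sin (w * x)) \<partial>lborel)"
proof -
  have "set_integrable lborel {0<..} (\<lambda>x. x powr (p - 1) * exp (- (x\<^sup>2)) * sin (w * x))"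
    using fp_integrable[OF p, of w] by (simp add: set_integrable_def)
  from set_borel_integral_eq_integral(2)[OF this] show ?thesis
    by (simp add: fp_def set_lebesgue_integral_def)
qed

lemma fubini1:
  fixes f :: "real \<Rightarrow> real \<Rightarrow> real"
  assumes meas: "(\<lambda>(x, y). f x y) \<in> borel_measurable (lborel \<Otimes>\<^sub>M lborel)"
    and inner: "\<And>x. integrable lborel (\<lambda>y. f x y)"
    and outer: "integrable lborel (\<lambda>x. \<integral>y. \<bar>f x y\<bar> \<partial>lborel)"
  shows "integrable (lborel \<Otimes>\<^sub>M lborel) (\<lambda>(x, y). f x y)"
    and "(\<integral>x. (\<integral>y. f x y \<partial>lborel) \<partial>lborel) = (\<integral>y. (\<integral>x. f x y \<partial>lborel) \<partial>lborel)"
proof -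
  show int: "integrable (lborel \<Otimes>\<^sub>M lborel) (\<lambda>(x, y). f x y)"
    by (rule lborel_pair.Fubini_integrable[OF meas]) (use outer inner in auto)
  show "(\<integral>x. (\<integral>y. f x y \<partial>lborel) \<partial>lborel) = (\<integral>y. (\<integral>x. f x y \<partial>lborel) \<partial>lborel)"
    using lborel_pair.Fubini_integral[OF int] by simp
qed

lemma fubini2:
  fixes f :: "real \<Rightarrow> real \<Rightarrow> real"
  assumes meas: "(\<lambda>(x, y). f x y) \<in> borel_measurable (lborel \<Otimes>\<^sub>M lborel)"
    and g: "integrable lborel g" and h: "integrable lborel h"
    and bnd: "\<And>x y. \<bar>f x y\<bar> \<le> g x * h y"
  shows "(\<integral>x. (\<integral>y. f x y \<partial>lborel) \<partial>lborel) = (\<integral>y. (\<integral>x. f x y \<partial>lborel) \<partial>lborel)"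
proof -
  have gm[measurable]: "g \<in> borel_measurable borel" and hm[measurable]: "h \<in> borel_measurable borel"
    using g h by auto
  have "integrable (lborel \<Otimes>\<^sub>M lborel) (\<lambda>(x, y). g x * h y)"
  proof (rule fubini1(1))
    show "(\<lambda>(x, y). g x * h y) \<in> borel_measurable (lborel \<Otimes>\<^sub>M lborel)" by measurable
    show "integrable lborel (\<lambda>y. g x * h y)" for x using h by simp
    have "(\<lambda>x. \<integral>y. \<bar>g x * h y\<bar> \<partial>lborel) = (\<lambda>x. \<bar>g x\<bar> * (\<integral>y. \<bar>h y\<bar> \<partial>lborel))"
      by (simp add: abs_mult)
    then show "integrable lborel (\<lambda>x. \<integral>y. \<bar>g x * h y\<bar> \<partial>lborel)"
      using g by simp
  qed
  then have int: "integrable (lborel \<Otimes>\<^sub>M lborel) (\<lambda>(x, y). f x y)"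
    by (rule Bochner_Integration.integrable_bound) (use meas bnd in \<open>auto simp: split_beta intro!: always_eventually order_trans[OF _ abs_ge_self]\<close>)
  show ?thesis
    using lborel_pair.Fubini_integral[OF int] by simp
qed

lemma stepA:
  fixes p w :: real
  assumes p: "0 < p" "p < 2"
  shows "Gamma p * (\<integral>t. indicator {0<..} t * (t powr (- p) * Dg w t) \<partial>lborel) =
    (\<integral>s. indicator {0<..} s * (s powr (p - 1) * (\<integral>t. indicator {0<..} t * exp (- (s * t)) * Dg w t \<partial>lborel)) \<partial>lborel)"
proof -
  define F where "F t s = indicator {0<..} t * Dg w t * (indicator {0<..} s * (s powr (p - 1) * exp (- (s * t))))" for t s :: real
  have inner: "(\<integral>s. F t s \<partial>lborel) = Gamma p * (indicator {0<..} t * (t powr (- p) * Dg w t))" for t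
  proof (cases "t > 0")
    case True
    then show ?thesis unfolding F_def integral_mult_right_zero gamma_scaled(2)[OF p(1) True]
      by (simp add: indicator_def)
  qed (simp add: F_def indicator_def)
  have inner_abs: "(\<integral>s. \<bar>F t s\<bar> \<partial>lborel) = \<bar>Gamma p * (indicator {0<..} t * (t powr (- p) * Dg w t))\<bar>" for t
  proof (cases "t > 0")
    case True
    have "(\<integral>s. \<bar>F t s\<bar> \<partial>lborel) = (\<integral>s. \<bar>Dg w t\<bar> * (indicator {0<..} s * (s powr (p - 1) * exp (- (s * t)))) \<partial>lborel)"
      unfolding F_def by (rule Bochner_Integration.integral_cong) (use True in \<open>auto simp: indicator_def abs_mult\<close>)
    also have "\<dots> = \<bar>Dg w t\<bar> * (Gamma p * t powr (- p))"
      unfolding integral_mult_right_zero gamma_scaled(2)[OF p(1) True] ..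
    finally show ?thesis using True Gamma_real_pos[OF p(1)] by (simp add: abs_mult indicator_def)
  qed (simp add: F_def indicator_def)
  have "Gamma p * (\<integral>t. indicator {0<..} t * (t powr (- p) * Dg w t) \<partial>lborel) = (\<integral>t. (\<integral>s. F t s \<partial>lborel) \<partial>lborel)"
    unfolding inner integral_mult_right_zero ..
  also have "\<dots> = (\<integral>s. (\<integral>t. F t s \<partial>lborel) \<partial>lborel)"
  proof (rule fubini1(2))
    show "(\<lambda>(x, y). F x y) \<in> borel_measurable (lborel \<Otimes>\<^sub>M lborel)"
      unfolding F_def by measurable
    show "integrable lborel (\<lambda>s. F t s)" for t
    proof (cases "t > 0")
      case True
      then show ?thesis unfolding F_def using gamma_scaled(1)[OF p(1) True] by simp
    qed (simp add: F_def indicator_def)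
    show "integrable lborel (\<lambda>t. \<integral>s. \<bar>F t s\<bar> \<partial>lborel)"
      unfolding inner_abs using L_integrable[OF p, of w] by simp
  qed
  also have "\<dots> = (\<integral>s. indicator {0<..} s * (s powr (p - 1) * (\<integral>t. indicator {0<..} t * exp (- (s * t)) * Dg w t \<partial>lborel)) \<partial>lborel)"
  proof (rule Bochner_Integration.integral_cong[OF refl])
    fix s
    have "(\<integral>t. F t s \<partial>lborel) = (\<integral>t. (indicator {0<..} s * s powr (p - 1)) * (indicator {0<..} t * exp (- (s * t)) * Dg w t) \<partial>lborel)"
      unfolding F_def by (rule Bochner_Integration.integral_cong) (simp_all add: ac_simps)
    then show "(\<integral>t. F t s \<partial>lborel) = indicator {0<..} s * (s powr (p - 1) * (\<integral>t. indicator {0<..} t * exp (- (s * t)) * Dg w t \<partial>lborel))"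
      unfolding integral_mult_right_zero by simp
  qed
  finally show ?thesis .
qed

lemma stepB:
  fixes s w :: real
  assumes s: "s > 0"
  shows "sqrt pi / 4 * (\<integral>t. indicator {0<..} t * exp (- (s * t)) * Dg w t \<partial>lborel) =
    (\<integral>x. indicator {0<..} x * (exp (- (x\<^sup>2)) * sin (w * x)) * (x / (s\<^sup>2 + x\<^sup>2)) \<partial>lborel)"
proof -
  define F where "F t x = indicator {0<..} t * exp (- (s * t)) * (indicator {0<..} x * (exp (- (x\<^sup>2)) * sin (w * x) * sin (t * x)))" for t x :: real
  have inner: "(\<integral>x. F t x \<partial>lborel) = sqrt pi / 4 * (indicator {0<..} t * exp (- (s * t)) * Dg w t)" for t
    unfolding F_def integral_mult_right_zero sin_sin_gauss(2) Dg_def by simp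
  have inner2: "(\<integral>t. F t x \<partial>lborel) = indicator {0<..} x * (exp (- (x\<^sup>2)) * sin (w * x)) * (x / (s\<^sup>2 + x\<^sup>2))" for x
  proof -
    have "(\<integral>t. F t x \<partial>lborel) = (\<integral>t. (indicator {0<..} x * (exp (- (x\<^sup>2)) * sin (w * x))) * (indicator {0<..} t * (exp (- (s * t)) * sin (x * t))) \<partial>lborel)"
      unfolding F_def by (rule Bochner_Integration.integral_cong) (simp_all add: ac_simps)
    also have "\<dots> = indicator {0<..} x * (exp (- (x\<^sup>2)) * sin (w * x)) * (x / (s\<^sup>2 + x\<^sup>2))"
      unfolding integral_mult_right_zero laplace_sin(2)[OF s] ..
    finally show ?thesis .
  qed
  have "sqrt pi / 4 * (\<integral>t. indicator {0<..} t * exp (- (s * t)) * Dg w t \<partial>lborel) = (\<integral>t. (\<integral>x. F t x \<partial>lborel) \<partial>lborel)"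
    unfolding inner integral_mult_right_zero ..
  also have "\<dots> = (\<integral>x. (\<integral>t. F t x \<partial>lborel) \<partial>lborel)"
  proof (rule fubini2)
    show "(\<lambda>(x, y). F x y) \<in> borel_measurable (lborel \<Otimes>\<^sub>M lborel)"
      unfolding F_def by measurable
    show "integrable lborel (\<lambda>t. indicator {0..} t * exp (- (s * t)))" by (rule exp_lin_integrable[OF s])
    show "integrable lborel (\<lambda>x::real. exp (- x\<^sup>2))" by (rule gauss_integrable)
    show "\<bar>F t x\<bar> \<le> indicator {0..} t * exp (- (s * t)) * exp (- x\<^sup>2)" for t x
      unfolding F_def by (auto simp: indicator_def abs_mult intro!: mult_left_le mult_le_one)
  qed
  also have "\<dots> = (\<integral>x. indicator {0<..} x * (exp (- (x\<^sup>2)) * sin (w * x)) * (x / (s\<^sup>2 + x\<^sup>2)) \<partial>lborel)"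
    unfolding inner2 ..
  finally show ?thesis .
qed

lemma stepC:
  fixes p w :: real
  assumes p: "0 < p" "p < 2"
  shows "(\<integral>s. indicator {0<..} s * (s powr (p - 1) * (\<integral>x. indicator {0<..} x * (exp (- (x\<^sup>2)) * sin (w * x)) * (x / (s\<^sup>2 + x\<^sup>2)) \<partial>lborel)) \<partial>lborel)
    = Kc p * (\<integral>x. indicator {0<..} x * (x powr (p - 1) * exp (- (x\<^sup>2)) * sin (w * x)) \<partial>lborel)"
proof -
  define F where "F x s = indicator {0<..} x * (exp (- (x\<^sup>2)) * sin (w * x)) * (indicator {0<..} s * (s powr (p - 1) * (x / (s\<^sup>2 + x\<^sup>2))))" for x s :: real
  have inner: "(\<integral>s. F x s \<partial>lborel) = Kc p * (indicator {0<..} x * (x powr (p - 1) * exp (- (x\<^sup>2)) * sin (w * x)))" for x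
  proof (cases "x > 0")
    case True
    then show ?thesis unfolding F_def integral_mult_right_zero K_scaled(2)[OF p True]
      by (simp add: indicator_def)
  qed (simp add: F_def indicator_def)
  have inner_abs: "(\<integral>s. \<bar>F x s\<bar> \<partial>lborel) = \<bar>Kc p * (indicator {0<..} x * (x powr (p - 1) * exp (- (x\<^sup>2)) * sin (w * x)))\<bar>" for x
  proof (cases "x > 0")
    case True
    have "(\<integral>s. \<bar>F x s\<bar> \<partial>lborel) = (\<integral>s. \<bar>exp (- (x\<^sup>2)) * sin (w * x)\<bar> * (indicator {0<..} s * (s powr (p - 1) * (x / (s\<^sup>2 + x\<^sup>2)))) \<partial>lborel)"
      unfolding F_def by (rule Bochner_Integration.integral_cong) (use True in \<open>auto simp: indicator_def abs_mult\<close>)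
    also have "\<dots> = \<bar>exp (- (x\<^sup>2)) * sin (w * x)\<bar> * (Kc p * x powr (p - 1))"
      unfolding integral_mult_right_zero K_scaled(2)[OF p True] ..
    finally show ?thesis using True K_pos[OF p] by (simp add: abs_mult indicator_def)
  qed (simp add: F_def indicator_def)
  have "Kc p * (\<integral>x. indicator {0<..} x * (x powr (p - 1) * exp (- (x\<^sup>2)) * sin (w * x)) \<partial>lborel) = (\<integral>x. (\<integral>s. F x s \<partial>lborel) \<partial>lborel)"
    unfolding inner integral_mult_right_zero ..
  also have "\<dots> = (\<integral>s. (\<integral>x. F x s \<partial>lborel) \<partial>lborel)"
  proof (rule fubini1(2))
    show "(\<lambda>(x, y). F x y) \<in> borel_measurable (lborel \<Otimes>\<^sub>M lborel)"
      unfolding F_def by measurable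
    show "integrable lborel (\<lambda>s. F x s)" for x
    proof (cases "x > 0")
      case True
      have "integrable lborel (\<lambda>s. (exp (- (x\<^sup>2)) * sin (w * x)) * (indicator {0<..} s * (s powr (p - 1) * (x / (s\<^sup>2 + x\<^sup>2)))))"
        by (rule Bochner_Integration.integrable_mult_right) (rule K_scaled(1)[OF p True])
      then show ?thesis unfolding F_def using True by (simp add: indicator_def)
    qed (simp add: F_def indicator_def)
    show "integrable lborel (\<lambda>x. \<integral>s. \<bar>F x s\<bar> \<partial>lborel)"
      unfolding inner_abs using fp_integrable[of p w] p by simp
  qed
  also have "\<dots> = (\<integral>s. indicator {0<..} s * (s powr (p - 1) * (\<integral>x. indicator {0<..} x * (exp (- (x\<^sup>2)) * sin (w * x)) * (x / (s\<^sup>2 + x\<^sup>2)) \<partial>lborel)) \<partial>lborel)"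
  proof (rule Bochner_Integration.integral_cong[OF refl])
    fix s
    have "(\<integral>x. F x s \<partial>lborel) = (\<integral>x. (indicator {0<..} s * s powr (p - 1)) * (indicator {0<..} x * (exp (- (x\<^sup>2)) * sin (w * x)) * (x / (s\<^sup>2 + x\<^sup>2))) \<partial>lborel)"
      unfolding F_def by (rule Bochner_Integration.integral_cong) (simp_all add: ac_simps)
    then show "(\<integral>x. F x s \<partial>lborel) = indicator {0<..} s * (s powr (p - 1) * (\<integral>x. indicator {0<..} x * (exp (- (x\<^sup>2)) * sin (w * x)) * (x / (s\<^sup>2 + x\<^sup>2)) \<partial>lborel))"
      unfolding integral_mult_right_zero by simp
  qed
  finally show ?thesis ..
qed

lemma main_identity:
  fixes p w :: real
  assumes p: "0 < p" "p < 2"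
  shows "sqrt pi * Gamma p / 4 * (\<integral>t. indicator {0<..} t * (t powr (- p) * Dg w t) \<partial>lborel) = Kc p * fp p w"
proof -
  have "sqrt pi * Gamma p / 4 * (\<integral>t. indicator {0<..} t * (t powr (- p) * Dg w t) \<partial>lborel)
     = sqrt pi / 4 * (\<integral>s. indicator {0<..} s * (s powr (p - 1) * (\<integral>t. indicator {0<..} t * exp (- (s * t)) * Dg w t \<partial>lborel)) \<partial>lborel)"
    using stepA[OF p, of w] by simp
  also have "\<dots> = (\<integral>s. indicator {0<..} s * (s powr (p - 1) * (sqrt pi / 4 * (\<integral>t. indicator {0<..} t * exp (- (s * t)) * Dg w t \<partial>lborel))) \<partial>lborel)"
    unfolding integral_mult_right_zero[symmetric] by (rule Bochner_Integration.integral_cong) simp_all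
  also have "\<dots> = (\<integral>s. indicator {0<..} s * (s powr (p - 1) * (\<integral>x. indicator {0<..} x * (exp (- (x\<^sup>2)) * sin (w * x)) * (x / (s\<^sup>2 + x\<^sup>2)) \<partial>lborel)) \<partial>lborel)"
  proof (rule Bochner_Integration.integral_cong[OF refl])
    fix s :: real
    show "indicator {0<..} s * (s powr (p - 1) * (sqrt pi / 4 * (\<integral>t. indicator {0<..} t * exp (- (s * t)) * Dg w t \<partial>lborel))) =
      indicator {0<..} s * (s powr (p - 1) * (\<integral>x. indicator {0<..} x * (exp (- (x\<^sup>2)) * sin (w * x)) * (x / (s\<^sup>2 + x\<^sup>2)) \<partial>lborel))"
    proof (cases "s > 0")
      case True
      then show ?thesis using stepB[OF True, of w] by (simp add: indicator_def)
    qed (simp add: indicator_def)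
  qed
  also have "\<dots> = Kc p * fp p w"
    unfolding stepC[OF p] using fp_lebesgue[of p w] p by simp
  finally show ?thesis .
qed

lemma sym_split:
  fixes F :: "real \<Rightarrow> real"
  assumes F: "integrable lborel F"
  shows "(\<integral>t. F t \<partial>lborel) = (\<integral>t. indicator {0<..} t * (F t + F (- t)) \<partial>lborel)"
proof -
  have Fm[measurable]: "F \<in> borel_measurable borel" using F by auto
  have i1: "integrable lborel (\<lambda>x. indicator {0<..} x * F x)"
    using integrable_mult_indicator[OF _ F, of "{0<..}"] by simp
  have i2: "integrable lborel (\<lambda>x. indicator {..0} x * F x)"
    using integrable_mult_indicator[OF _ F, of "{..0}"] by simp
  have Fr: "integrable lborel (\<lambda>x. F (0 + (-1) * x))"
    by (rule lborel_integrable_real_affine[OF F]) simp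
  have i3: "integrable lborel (\<lambda>x. indicator {0<..} x * F (- x))"
    using integrable_mult_indicator[OF _ Fr, of "{0<..}"] by simp
  have "(\<integral>x. F x \<partial>lborel) = (\<integral>x. indicator {0<..} x * F x + indicator {..0} x * F x \<partial>lborel)"
    by (rule Bochner_Integration.integral_cong) (auto simp: indicator_def)
  also have "\<dots> = (\<integral>x. indicator {0<..} x * F x \<partial>lborel) + (\<integral>x. indicator {..0} x * F x \<partial>lborel)"
    by (rule Bochner_Integration.integral_add[OF i1 i2])
  also have "(\<integral>x. indicator {..0} x * F x \<partial>lborel) = \<bar>-1\<bar> *\<^sub>R (\<integral>x. indicator {..0} (0 + (-1) * x) * F (0 + (-1) * x) \<partial>lborel)"
    by (rule lborel_integral_real_affine) simp
  also have "\<dots> = (\<integral>x. indicator {0<..} x * F (- x) \<partial>lborel)"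
    by (simp, rule integral_cong_AE)
       (auto intro!: eventually_mono[OF AE_lborel_singleton[of 0]] simp: indicator_def)
  also have "(\<integral>x. indicator {0<..} x * F x \<partial>lborel) + (\<integral>x. indicator {0<..} x * F (- x) \<partial>lborel)
     = (\<integral>x. indicator {0<..} x * F x + indicator {0<..} x * F (- x) \<partial>lborel)"
    by (rule Bochner_Integration.integral_add[OF i1 i3, symmetric])
  finally show ?thesis by (simp add: distrib_left)
qed

lemma pv_part:
  fixes p w :: real
  assumes p: "0 < p" "p < 2"
  shows "has_pv_integral (\<lambda>t. sgn t * \<bar>t\<bar> powr (- p) * exp (- ((w - t)\<^sup>2) / 4))
           (\<integral>t. indicator {0<..} t * (t powr (- p) * Dg w t) \<partial>lborel)"
proof -
  let ?phi = "\<lambda>t. sgn t * \<bar>t\<bar> powr (- p) * exp (- ((w - t)\<^sup>2) / 4)"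
  let ?H = "\<lambda>t. indicator {0<..} t * (t powr (- p) * Dg w t)"
  have Hi: "integrable lborel ?H" by (rule L_integrable[OF p])
  have si: "set_integrable lborel {t. e < \<bar>t\<bar>} ?phi" if e: "e > 0" for e
    unfolding set_integrable_def
  proof (rule Bochner_Integration.integrable_bound)
    show "integrable lborel (\<lambda>t. e powr (- p) * exp (- ((w - t)\<^sup>2) / 4))"
      using gauss_shift_integrable[of w] by simp
    show "(\<lambda>t. indicator {t. e < \<bar>t\<bar>} t *\<^sub>R ?phi t) \<in> borel_measurable lborel"
      by measurable
    show "AE t in lborel. norm (indicator {t. e < \<bar>t\<bar>} t *\<^sub>R ?phi t) \<le> norm (e powr (- p) * exp (- ((w - t)\<^sup>2) / 4))"
    proof (intro always_eventually allI)
      fix t :: real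
      show "norm (indicator {t. e < \<bar>t\<bar>} t *\<^sub>R ?phi t) \<le> norm (e powr (- p) * exp (- ((w - t)\<^sup>2) / 4))"
      proof (cases "e < \<bar>t\<bar>")
        case True
        have "\<bar>t\<bar> powr (- p) \<le> e powr (- p)"
          using True e p by (intro powr_mono2') auto
        moreover have "\<bar>sgn t\<bar> \<le> 1" by (simp add: abs_sgn_eq)
        ultimately have "\<bar>sgn t\<bar> * \<bar>t\<bar> powr (- p) \<le> 1 * e powr (- p)"
          by (intro mult_mono) auto
        then show ?thesis using True by (simp add: abs_mult)
      qed (simp add: indicator_def)
    qed
  qed
  have eq: "integral {t. e < \<bar>t\<bar>} ?phi = (\<integral>t. indicator {e<..} t * ?H t \<partial>lborel)" if e: "e > 0" for e
  proof -
    have "integral {t. e < \<bar>t\<bar>} ?phi = (\<integral>t. indicator {t. e < \<bar>t\<bar>} t * ?phi t \<partial>lborel)"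
      using set_borel_integral_eq_integral(2)[OF si[OF e]] by (simp add: set_lebesgue_integral_def)
    also have "\<dots> = (\<integral>t. indicator {0<..} t * (indicator {t. e < \<bar>t\<bar>} t * ?phi t + indicator {t. e < \<bar>t\<bar>} (- t) * ?phi (- t)) \<partial>lborel)"
      by (rule sym_split) (use si[OF e] in \<open>simp add: set_integrable_def\<close>)
    also have "\<dots> = (\<integral>t. indicator {e<..} t * ?H t \<partial>lborel)"
    proof (rule Bochner_Integration.integral_cong[OF refl])
      fix t :: real
      show "indicator {0<..} t * (indicator {t. e < \<bar>t\<bar>} t * ?phi t + indicator {t. e < \<bar>t\<bar>} (- t) * ?phi (- t)) = indicator {e<..} t * ?H t"
        using e by (cases "t > 0"; cases "e < t") (auto simp: indicator_def Dg_def power2_commute algebra_simps)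
    qed
    finally show ?thesis .
  qed
  have lim: "((\<lambda>T. \<integral>t. indicator {inverse T<..} t * ?H t \<partial>lborel) \<longlongrightarrow> (\<integral>t. ?H t \<partial>lborel)) at_top"
  proof (rule integral_dominated_convergence_at_top[where w = "\<lambda>t. \<bar>?H t\<bar>"])
    show "?H \<in> borel_measurable lborel" by measurable
    show "(\<lambda>t. indicator {inverse T<..} t * ?H t) \<in> borel_measurable lborel" for T by measurable
    show "integrable lborel (\<lambda>t. \<bar>?H t\<bar>)" using Hi by simp
    show "AE t in lborel. ((\<lambda>T. indicator {inverse T<..} t * ?H t) \<longlongrightarrow> ?H t) at_top"
    proof (intro always_eventually allI)
      fix t :: real
      show "((\<lambda>T. indicator {inverse T<..} t * ?H t) \<longlongrightarrow> ?H t) at_top"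
      proof (cases "t > 0")
        case True
        have "\<forall>\<^sub>F T in at_top. indicator {inverse T<..} t * ?H t = ?H t"
        proof (rule eventually_mono[OF eventually_gt_at_top[of "inverse t"]])
          fix T assume "inverse t < T"
          then have "inverse T < t" using True
            by (metis inverse_inverse_eq inverse_less_iff_less inverse_positive_iff_positive order_less_trans)
          then show "indicator {inverse T<..} t * ?H t = ?H t" by (simp add: indicator_def)
        qed
        then show ?thesis by (rule tendsto_eventually)
      qed (simp add: indicator_def)
    qed
    show "\<forall>\<^sub>F T in at_top. AE t in lborel. norm (indicator {inverse T<..} t * ?H t) \<le> \<bar>?H t\<bar>"
      by (intro always_eventually allI) (simp add: indicator_def)
  qed
  have lim2: "((\<lambda>e. integral {t. e < \<bar>t\<bar>} ?phi) \<longlongrightarrow> (\<integral>t. ?H t \<partial>lborel)) (at_right 0)"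
  proof -
    have "((\<lambda>e. \<integral>t. indicator {e<..} t * ?H t \<partial>lborel) \<longlongrightarrow> (\<integral>t. ?H t \<partial>lborel)) (at_right 0)"
      unfolding at_right_to_top filterlim_filtermap using lim .
    moreover have "\<forall>\<^sub>F e in at_right 0. (\<integral>t. indicator {e<..} t * ?H t \<partial>lborel) = integral {t. e < \<bar>t\<bar>} ?phi"
      by (rule eventually_at_right_less[THEN eventually_mono]) (rule eq[symmetric])
    ultimately show ?thesis using Lim_transform_eventually by fastforce
  qed
  show ?thesis
    unfolding has_pv_integral_def
    using si set_borel_integral_eq_integral(1) lim2 by blast
qed

lemma Dg_pos: "w > 0 \<Longrightarrow> t > 0 \<Longrightarrow> Dg w t > 0"
  unfolding Dg_def using mult_pos_pos[of w t] by (simp add: power2_eq_square field_simps)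

lemma Dg_neg: "Dg (- w) t = - Dg w t"
  unfolding Dg_def by (simp add: power2_eq_square algebra_simps)

lemma L_nonzero:
  fixes p w :: real
  assumes p: "0 < p" "p < 2" and w: "w \<noteq> 0"
  shows "(\<integral>t. indicator {0<..} t * (t powr (- p) * Dg w t) \<partial>lborel) \<noteq> 0"
proof (cases "w > 0")
  case True
  have "(\<integral>t. indicator {0<..} t * (t powr (- p) * Dg w t) \<partial>lborel) > 0"
    by (rule integral_pos_on_pos[OF L_integrable[OF p]]) (use True Dg_pos in auto)
  then show ?thesis by simp
next
  case False
  then have w': "- w > 0" using w by simp
  have "(\<integral>t. indicator {0<..} t * (t powr (- p) * Dg (- w) t) \<partial>lborel) > 0"
    by (rule integral_pos_on_pos[OF L_integrable[OF p]]) (use w' Dg_pos in auto)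
  moreover have "(\<integral>t. indicator {0<..} t * (t powr (- p) * Dg (- w) t) \<partial>lborel) = - (\<integral>t. indicator {0<..} t * (t powr (- p) * Dg w t) \<partial>lborel)"
    unfolding Dg_neg by simp
  ultimately show ?thesis by simp
qed

lemma fp2:
  fixes w :: real
  shows "fp 2 w = w / 4 * sqrt pi * exp (- (w\<^sup>2) / 4)"
proof -
  let ?f = "\<lambda>x. x * exp (- (x\<^sup>2)) * sin (w * x) - w / 2 * (exp (- (x\<^sup>2)) * cos (w * x))"
  define F where "F x = - (1 / 2) * (exp (- (x\<^sup>2)) * sin (w * x))" for x :: real
  have i1: "integrable lborel (\<lambda>x. indicator {0<..} x * (x * exp (- (x\<^sup>2)) * sin (w * x)))"
    using fp_integrable[of 2 w] by (rule Bochner_Integration.integrable_cong[THEN iffD1, rotated 2])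
                                   (auto simp: indicator_def)
  have hc: "integrable lborel (\<lambda>x. exp (- (x\<^sup>2)) * cos (w * x))" by (rule gauss_cos_integrable)
  have i2: "integrable lborel (\<lambda>x. indicator {0<..} x * (exp (- (x\<^sup>2)) * cos (w * x)))"
    by (rule even_half(1)[OF hc]) simp
  have c2: "(\<integral>x. indicator {0<..} x * (exp (- (x\<^sup>2)) * cos (w * x)) \<partial>lborel) = sqrt pi * exp (- (w\<^sup>2) / 4) / 2"
    using even_half(2)[OF hc] gauss_cos[of w] by simp
  have der: "(F has_real_derivative ?f x) (at x)" for x
    unfolding F_def by (auto intro!: derivative_eq_intros simp: field_simps)
  have int: "integrable lborel (\<lambda>x. indicator {0<..} x * ?f x)"
    using Bochner_Integration.integrable_diff[OF i1 integrable_mult_right[OF i2, of "w / 2"]]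
    by (simp add: algebra_simps)
  have lim: "(F \<longlongrightarrow> 0) at_top"
  proof (rule Lim_null_comparison)
    show "\<forall>\<^sub>F x in at_top. norm (F x) \<le> exp (- (x\<^sup>2)) / 2"
      by (intro always_eventually allI) (auto simp: F_def abs_mult intro!: mult_left_le)
    show "((\<lambda>x::real. exp (- (x\<^sup>2)) / 2) \<longlongrightarrow> 0) at_top" by real_asymp
  qed
  have "(\<integral>x. indicator {0<..} x * ?f x \<partial>lborel) = 0 - F 0"
    by (rule ftc_half[OF _ der int lim]) measurable
  then have z: "(\<integral>x. indicator {0<..} x * ?f x \<partial>lborel) = 0" by (simp add: F_def)
  have "(\<integral>x. indicator {0<..} x * ?f x \<partial>lborel) =
     (\<integral>x. indicator {0<..} x * (x * exp (- (x\<^sup>2)) * sin (w * x)) \<partial>lborel) - w / 2 * (\<integral>x. indicator {0<..} x * (exp (- (x\<^sup>2)) * cos (w * x)) \<partial>lborel)"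
    using Bochner_Integration.integral_diff[OF i1 integrable_mult_right[OF i2, of "w / 2"]]
    by (simp add: algebra_simps)
  with z have "(\<integral>x. indicator {0<..} x * (x * exp (- (x\<^sup>2)) * sin (w * x)) \<partial>lborel) = w / 2 * (\<integral>x. indicator {0<..} x * (exp (- (x\<^sup>2)) * cos (w * x)) \<partial>lborel)"
    by linarith
  also have "\<dots> = w / 2 * (sqrt pi * exp (- (w\<^sup>2) / 4) / 2)" unfolding c2 ..
  finally have "(\<integral>x. indicator {0<..} x * (x * exp (- (x\<^sup>2)) * sin (w * x)) \<partial>lborel) = w / 4 * sqrt pi * exp (- (w\<^sup>2) / 4)"
    by simp
  moreover have "fp 2 w = (\<integral>x. indicator {0<..} x * (x * exp (- (x\<^sup>2)) * sin (w * x)) \<partial>lborel)"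
  proof -
    have "fp 2 w = (\<integral>x. indicator {0<..} x * (x powr (2 - 1) * exp (- (x\<^sup>2)) * sin (w * x)) \<partial>lborel)"
      by (rule fp_lebesgue) auto
    also have "\<dots> = (\<integral>x. indicator {0<..} x * (x * exp (- (x\<^sup>2)) * sin (w * x)) \<partial>lborel)"
    proof (rule Bochner_Integration.integral_cong[OF refl])
      fix x :: real
      show "indicator {0<..} x * (x powr (2 - 1) * exp (- (x\<^sup>2)) * sin (w * x)) = indicator {0<..} x * (x * exp (- (x\<^sup>2)) * sin (w * x))"
        by (cases "x > 0") (simp_all add: indicator_def)
    qed
    finally show ?thesis .
  qed
  ultimately show ?thesis by simp
qed

theorem lemma17:
  shows "(\<forall>p::real. 0 < p \<and> p < 2 \<longrightarrow>
            (\<exists>c::real. c \<noteq> 0 \<and>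
               (\<forall>w::real. \<exists>L. has_pv_integral
                   (\<lambda>t. sgn t * \<bar>t\<bar> powr (- p) * exp (- ((w - t)\<^sup>2) / 4)) L
                 \<and> fp p w = c * L)))
       \<and> (\<forall>p::real. \<forall>w::real. 0 < p \<and> p \<le> 2 \<and> fp p w = 0 \<longrightarrow> w = 0)"
proof (intro conjI allI impI)
  fix p :: real
  assume "0 < p \<and> p < 2"
  then have p: "0 < p" "p < 2" by auto
  have G: "Gamma p > 0" by (rule Gamma_real_pos[OF p(1)])
  have K: "Kc p > 0" by (rule K_pos[OF p])
  show "\<exists>c::real. c \<noteq> 0 \<and>
               (\<forall>w::real. \<exists>L. has_pv_integral
                   (\<lambda>t. sgn t * \<bar>t\<bar> powr (- p) * exp (- ((w - t)\<^sup>2) / 4)) L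
                 \<and> fp p w = c * L)"
  proof (rule exI[where x = "sqrt pi * Gamma p / (4 * Kc p)"], intro conjI allI)
    show "sqrt pi * Gamma p / (4 * Kc p) \<noteq> 0" using G K by simp
    fix w :: real
    show "\<exists>L. has_pv_integral (\<lambda>t. sgn t * \<bar>t\<bar> powr (- p) * exp (- ((w - t)\<^sup>2) / 4)) L
                 \<and> fp p w = sqrt pi * Gamma p / (4 * Kc p) * L"
    proof (rule exI[where x = "\<integral>t. indicator {0<..} t * (t powr (- p) * Dg w t) \<partial>lborel"], rule conjI)
      show "has_pv_integral (\<lambda>t. sgn t * \<bar>t\<bar> powr (- p) * exp (- ((w - t)\<^sup>2) / 4))
           (\<integral>t. indicator {0<..} t * (t powr (- p) * Dg w t) \<partial>lborel)"
        by (rule pv_part[OF p])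
      show "fp p w = sqrt pi * Gamma p / (4 * Kc p) * (\<integral>t. indicator {0<..} t * (t powr (- p) * Dg w t) \<partial>lborel)"
        using main_identity[OF p, of w] K by (simp add: field_simps)
    qed
  qed
next
  fix p w :: real
  assume a: "0 < p \<and> p \<le> 2 \<and> fp p w = 0"
  show "w = 0"
  proof (cases "p = 2")
    case True
    then show ?thesis using a fp2[of w] by simp
  next
    case False
    then have p: "0 < p" "p < 2" using a by auto
    show ?thesis
    proof (rule ccontr)
      assume w: "w \<noteq> 0"
      have "sqrt pi * Gamma p / 4 * (\<integral>t. indicator {0<..} t * (t powr (- p) * Dg w t) \<partial>lborel) = 0"
        using main_identity[OF p, of w] a by simp
      moreover have "sqrt pi * Gamma p / 4 \<noteq> 0" using Gamma_real_pos[OF p(1)] by simp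
      ultimately show False using L_nonzero[OF p w] by simp
    qed
  qed
qed

end
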